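(* Let $p$ be a prime, $\overline{\mathbb{F}}_p$ an algebraic closure of $\mathbb{F}_p$, and let $V$ be a finite subgroup of the additive group of $\overline{\mathbb{F}}_p$. For any finite additive subgroup $U\subseteq\overline{\mathbb{F}}_p$ put $L_U(T)=\prod_{u\in U}(T-u)$. Let $f(x)\in\overline{\mathbb{F}}_p[x]$ and $h(T,x)=L_V(T)-f(x)\in\overline{\mathbb{F}}_p[T,x]$. Then $h(T,x)$ is reducible in $\overline{\mathbb{F}}_p[T,x]$ if and only if there exist a polynomial $g(x)\in\overline{\mathbb{F}}_p[x]$ and a proper subgroup $W\subsetneq V$ such that $f(x)=L_{W'}(g(x))$, where $W'=L_W(V)=\{L_W(v):v\in V\}$.
   Context: For a finite additive subgroup $U$ of $\overline{\mathbb{F}}_p$, $L_U(T)$ is a separable $\mathbb{F}_p$-linear (additive) polynomial of degree $|U|$, and $L_U:\overline{\mathbb{F}}_p\to\overline{\mathbb{F}}_p$ is an additive homomorphism with kernel $U$. *)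

theory Defs
  imports "HOL-Computational_Algebra.Computational_Algebra"
begin

definition finite_additive_subgroup :: "'a::field set \<Rightarrow> bool" where
  "finite_additive_subgroup U \<longleftrightarrow> finite U \<and> 0 \<in> U \<and>
     (\<forall>a\<in>U. \<forall>b\<in>U. a + b \<in> U) \<and> (\<forall>a\<in>U. - a \<in> U)"

definition subspace_poly :: "'a::field set \<Rightarrow> 'a poly" where
  "subspace_poly U = (\<Prod>u\<in>U. [:- u, 1:])"

definition algebraic_over_prime_field :: "'a::field itself \<Rightarrow> bool" where
  "algebraic_over_prime_field TYPE('a) \<longleftrightarrow>
     (\<forall>x::'a. \<exists>q. q \<noteq> 0 \<and> (\<forall>i. coeff q i \<in> range of_int) \<and> poly q x = 0)"

text \<open>Bivariate polynomials in T and x are represented as 'a poly poly: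
  the outer variable is T, the coefficients are polynomials in x.
  h(T,x) = L_V(T) - f(x).\<close>
definition h_poly :: "'a::field set \<Rightarrow> 'a poly \<Rightarrow> 'a poly poly" where
  "h_poly V f = map_poly (\<lambda>c. [:c:]) (subspace_poly V) - [:f:]"

end

theory Submission
  imports Defs
begin

definition tr :: "'a::comm_ring_1 \<Rightarrow> 'a poly \<Rightarrow> 'a poly" where
  "tr a P = pcompose P [:a, 1:]"

lemma pcompose_lin_lin: "pcompose [:a, 1:] [:b, 1:] = [:a + b, (1::'a::comm_ring_1):]"
  by (simp add: pcompose_pCons)

lemma tr_tr: "tr b (tr a P) = tr (a + b) P"
  unfolding tr_def by (simp add: pcompose_assoc[symmetric] pcompose_lin_lin)

lemma tr_0[simp]: "tr 0 P = P"
  unfolding tr_def by simp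

lemma tr_mult: "tr a (P * Q) = tr a P * tr a Q"
  unfolding tr_def by (simp add: pcompose_mult)

lemma tr_diff: "tr a (P - Q) = tr a P - tr a Q"
  unfolding tr_def by (simp add: pcompose_diff)

lemma tr_const[simp]: "tr a [:c:] = [:c:]"
  unfolding tr_def by simp

lemma poly_tr: "poly (tr a P) x = poly P (a + x)"
  unfolding tr_def by (simp add: poly_pcompose)

lemma degree_tr: "degree (tr a (P::'a::idom poly)) = degree P"
  unfolding tr_def by (simp add: degree_pcompose)

lemma lead_coeff_tr: "lead_coeff (tr a (P::'a::idom poly)) = lead_coeff P"
  unfolding tr_def by (subst lead_coeff_comp) auto

lemma tr_dvd: "A dvd B \<Longrightarrow> tr a A dvd tr a B"
  by (auto simp: tr_mult)

lemma tr_inv: "tr (- a) (tr a P) = P"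
  by (simp add: tr_tr)

lemma tr_inj: "tr a P = tr a Q \<Longrightarrow> P = Q"
  by (metis tr_inv)

lemma roots_prod_dvd:
  fixes p :: "'a::idom poly"
  assumes "finite S" "\<forall>s\<in>S. poly p s = 0"
  shows "(\<Prod>s\<in>S. [:-s, 1:]) dvd p"
  using assms
proof (induction S arbitrary: p rule: finite_induct)
  case empty
  then show ?case by simp
next
  case (insert s S)
  have "[:-s, 1:] dvd p" using insert.prems poly_eq_0_iff_dvd by blast
  then obtain q where q: "p = [:-s, 1:] * q" by (elim dvdE)
  have "\<forall>t\<in>S. poly q t = 0"
  proof
    fix t assume t: "t \<in> S"
    then have "t \<noteq> s" using insert.hyps by auto
    moreover have "poly p t = 0" using insert.prems t by auto
    ultimately show "poly q t = 0" using q by simp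
  qed
  then have "(\<Prod>s\<in>S. [:-s, 1:]) dvd q" using insert.IH by blast
  moreover have "(\<Prod>s\<in>insert s S. [:-s, 1:]) = [:-s, 1:] * (\<Prod>s\<in>S. [:-s, 1:])"
    using insert.hyps by simp
  ultimately show ?case using q by (metis dvd_refl mult_dvd_mono)
qed

lemma sp_roots:
  fixes U :: "'a::field set"
  assumes "finite U"
  shows "poly (subspace_poly U) x = 0 \<longleftrightarrow> x \<in> U"
  using assms by (simp add: subspace_poly_def poly_prod)

lemma sp_degree:
  fixes U :: "'a::field set"
  assumes "finite U"
  shows "degree (subspace_poly U) = card U"
  unfolding subspace_poly_def
  by (subst degree_prod_eq_sum_degree) auto

lemma sp_monic: "lead_coeff (subspace_poly (U::'a::field set)) = 1"
  unfolding subspace_poly_def by (simp add: lead_coeff_prod)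

lemma sp_nz: "subspace_poly (U::'a::field set) \<noteq> 0"
  using sp_monic[of U] by auto

lemma fas_card_pos: "finite_additive_subgroup U \<Longrightarrow> card U > 0"
  unfolding finite_additive_subgroup_def using card_gt_0_iff by blast

lemma sp_tr:
  fixes U :: "'a::field set"
  assumes U: "finite_additive_subgroup U" and u: "u \<in> U"
  shows "tr u (subspace_poly U) = subspace_poly U"
proof -
  have fin: "finite U" using U unfolding finite_additive_subgroup_def by auto
  have cl: "\<And>a b. a \<in> U \<Longrightarrow> b \<in> U \<Longrightarrow> a + b \<in> U" "\<And>a. a \<in> U \<Longrightarrow> -a \<in> U"
    using U unfolding finite_additive_subgroup_def by auto
  have "tr u (subspace_poly U) = (\<Prod>w\<in>U. [:u - w, 1:])"
    unfolding subspace_poly_def tr_def pcompose_prod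
    by (intro prod.cong) (auto simp: pcompose_pCons)
  also have "\<dots> = (\<Prod>w\<in>U. [:- w, 1:])"
  proof (rule prod.reindex_bij_witness[where i="\<lambda>w. w + u" and j="\<lambda>w. w - u"])
    fix a assume "a \<in> U"
    then show "a - u \<in> U" using cl u by (metis diff_conv_add_uminus)
  next
    fix a assume "a \<in> U"
    then show "a + u \<in> U" using cl u by auto
  qed auto
  finally show ?thesis unfolding subspace_poly_def .
qed

lemma sp_shift:
  fixes U :: "'a::field set"
  assumes U: "finite_additive_subgroup U" and u: "u \<in> U"
  shows "poly (subspace_poly U) (u + x) = poly (subspace_poly U) x"
  using poly_tr[of u "subspace_poly U" x] sp_tr[OF U u] by simp

lemma sp_add:
  fixes U :: "'a::field set"
  assumes U: "finite_additive_subgroup U"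
  shows "poly (subspace_poly U) (a + b) = poly (subspace_poly U) a + poly (subspace_poly U) b"
proof -
  define L where "L = subspace_poly U"
  define n where "n = card U"
  have fin: "finite U" using U unfolding finite_additive_subgroup_def by auto
  have n: "n > 0" using fas_card_pos[OF U] n_def by auto
  define Q where "Q = tr a L - L - [:poly L a:]"
  have degL: "degree L = n" using sp_degree[OF fin] L_def n_def by simp
  have leadL: "lead_coeff L = 1" using sp_monic L_def by simp
  have roots: "\<forall>u\<in>U. poly Q u = 0"
  proof
    fix u assume u: "u \<in> U"
    have "poly L (a + u) = poly L a"
      using sp_shift[OF U u, of a] L_def by (simp add: add.commute)
    moreover have "poly L u = 0" using sp_roots[OF fin] u L_def by simp
    ultimately show "poly Q u = 0" unfolding Q_def by (simp add: poly_tr)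
  qed
  have Q0: "Q = 0"
  proof (rule ccontr)
    assume nz: "Q \<noteq> 0"
    have LQ: "L dvd Q" using roots_prod_dvd[OF fin roots] unfolding L_def subspace_poly_def .
    have "n \<le> degree Q" using dvd_imp_degree_le[OF LQ nz] degL by simp
    moreover have "degree Q \<le> n - 1"
    proof (rule degree_le, intro allI impI)
      fix i assume i: "n - 1 < i"
      have dtr: "degree (tr a L) = n" using degree_tr[of a L] degL by simp
      have ltr: "coeff (tr a L) n = 1" using lead_coeff_tr[of a L] leadL dtr by simp
      have c3: "coeff [:poly L a:] i = 0" using i n by (cases i) auto
      have cQ: "coeff Q i = coeff (tr a L) i - coeff L i" unfolding Q_def using c3 by simp
      show "coeff Q i = 0"
      proof (cases "i = n")
        case True
        then have "coeff L i = 1" using leadL degL by simp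
        then show ?thesis using True ltr cQ by simp
      next
        case False
        then have "i > n" using i by auto
        then have "coeff (tr a L) i = 0" "coeff L i = 0"
          using dtr degL by (simp_all add: coeff_eq_0)
        then show ?thesis using cQ by simp
      qed
    qed
    ultimately show False using n by auto
  qed
  have "poly Q b = 0" using Q0 by simp
  then show ?thesis unfolding Q_def L_def by (simp add: poly_tr algebra_simps)
qed

lemma sp_neg:
  fixes U :: "'a::field set"
  assumes U: "finite_additive_subgroup U"
  shows "poly (subspace_poly U) (a - b) = poly (subspace_poly U) a - poly (subspace_poly U) b"
  using sp_add[OF U, of "a - b" b] by simp

lemma monic_dvd_eq:
  fixes D A :: "'a::idom poly"
  assumes "lead_coeff D = 1" "lead_coeff A = 1" "D dvd A" "degree A \<le> degree D"
  shows "D = A"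
proof -
  obtain k where k: "A = D * k" using assms(3) by (elim dvdE)
  have A0: "A \<noteq> 0" "D \<noteq> 0" using assms by auto
  then have k0: "k \<noteq> 0" using k by auto
  have "degree A = degree D + degree k" using k degree_mult_eq[OF A0(2) k0] by simp
  then have "degree k = 0" using assms(4) by simp
  then obtain c where c: "k = [:c:]" by (metis degree_eq_zeroE)
  have "lead_coeff A = lead_coeff D * lead_coeff k" using k by (simp add: lead_coeff_mult)
  then have "c = 1" using assms c by simp
  then show ?thesis using k c by simp
qed

lemma count_fibers:
  fixes V W :: "'a::ab_group_add set" and \<phi> :: "'a \<Rightarrow> 'b"
  assumes finV: "finite V" and finW: "finite W"
    and cl: "\<And>v w. v \<in> V \<Longrightarrow> w \<in> W \<Longrightarrow> v + w \<in> V"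
    and fib: "\<And>v v'. v \<in> V \<Longrightarrow> v' \<in> V \<Longrightarrow> \<phi> v' = \<phi> v \<longleftrightarrow> v' - v \<in> W"
  shows "card V = card (\<phi> ` V) * card W"
proof -
  have "(\<Sum>y\<in>\<phi> ` V. sum (\<lambda>_. (1::nat)) {x\<in>V. \<phi> x = y}) = sum (\<lambda>_. (1::nat)) V"
    by (rule sum.group[OF finV finite_imageI[OF finV] subset_refl])
  then have "card V = (\<Sum>y\<in>\<phi> ` V. card {x\<in>V. \<phi> x = y})" by (simp only: card_eq_sum)
  also have "\<dots> = (\<Sum>y\<in>\<phi> ` V. card W)"
  proof (rule sum.cong[OF refl])
    fix y assume "y \<in> \<phi> ` V"
    then obtain v where v: "v \<in> V" "y = \<phi> v" by blast
    have "{x\<in>V. \<phi> x = y} = (\<lambda>w. v + w) ` W"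
    proof (intro set_eqI iffI)
      fix x assume x: "x \<in> {x\<in>V. \<phi> x = y}"
      then have xV: "x \<in> V" by blast
      have "\<phi> x = \<phi> v" using x v by blast
      then have "x - v \<in> W" using fib[OF v(1) xV] by blast
      moreover have "x = v + (x - v)" by simp
      ultimately show "x \<in> (\<lambda>w. v + w) ` W" by blast
    next
      fix x assume "x \<in> (\<lambda>w. v + w) ` W"
      then obtain w where w: "w \<in> W" "x = v + w" by blast
      then have xV: "x \<in> V" using cl v by blast
      have "x - v \<in> W" using w by simp
      then have "\<phi> x = \<phi> v" using fib[OF v(1) xV] by blast
      then show "x \<in> {x\<in>V. \<phi> x = y}" using xV v by blast
    qed
    then show "card {x\<in>V. \<phi> x = y} = card W"
      by (simp add: card_image inj_on_def)
  qed
  also have "\<dots> = card (\<phi> ` V) * card W" by simp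
  finally show ?thesis .
qed

lemma minus_const_props:
  fixes p :: "'a::comm_ring_1 poly"
  assumes "0 < degree p"
  shows "degree (p - [:c:]) = degree p" "lead_coeff (p - [:c:]) = lead_coeff p"
proof -
  have e: "p - [:c:] = p + [:-c:]" by simp
  have d: "degree [:-c:] < degree p" using assms by simp
  show "degree (p - [:c:]) = degree p" unfolding e by (rule degree_add_eq_left[OF d])
  show "lead_coeff (p - [:c:]) = lead_coeff p"
    unfolding e add.commute[of p "[:-c:]"] by (rule lead_coeff_add_le[OF d])
qed

lemma fas_props:
  assumes "finite_additive_subgroup U"
  shows "finite U" "0 \<in> U" "\<And>a b. a \<in> U \<Longrightarrow> b \<in> U \<Longrightarrow> a + b \<in> U"
    "\<And>a. a \<in> U \<Longrightarrow> - a \<in> U" "\<And>a b. a \<in> U \<Longrightarrow> b \<in> U \<Longrightarrow> a - b \<in> U"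
proof -
  have f: "finite U" "0 \<in> U" "\<forall>a\<in>U. \<forall>b\<in>U. a + b \<in> U" "\<forall>a\<in>U. - a \<in> U"
    using assms unfolding finite_additive_subgroup_def by blast+
  show "finite U" "0 \<in> U" by (rule f(1), rule f(2))
  show "\<And>a b. a \<in> U \<Longrightarrow> b \<in> U \<Longrightarrow> a + b \<in> U" using f(3) by blast
  show "\<And>a. a \<in> U \<Longrightarrow> - a \<in> U" using f(4) by blast
  show "\<And>a b. a \<in> U \<Longrightarrow> b \<in> U \<Longrightarrow> a - b \<in> U"
  proof -
    fix a b assume "a \<in> U" "b \<in> U"
    then have "a + (- b) \<in> U" using f(3,4) by blast
    then show "a - b \<in> U" by simp
  qed
qed

lemma sp_compose:
  fixes V W :: "'a::field set"
  assumes V: "finite_additive_subgroup V" and W: "finite_additive_subgroup W" and WV: "W \<subseteq> V"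
  shows "pcompose (subspace_poly (poly (subspace_poly W) ` V)) (subspace_poly W) = subspace_poly V"
proof -
  define LW where "LW = subspace_poly W"
  define W' where "W' = poly LW ` V"
  define P where "P = pcompose (subspace_poly W') LW"
  note Vp = fas_props[OF V] and Wp = fas_props[OF W]
  have finW': "finite W'" unfolding W'_def using Vp(1) by simp
  have cnt: "card V = card W' * card W"
    unfolding W'_def
  proof (rule count_fibers[OF Vp(1) Wp(1)])
    fix v w assume "v \<in> V" "w \<in> W"
    then show "v + w \<in> V" using Vp(3) WV by auto
  next
    fix v v' assume vv: "v \<in> V" "v' \<in> V"
    have "poly LW (v' - v) = poly LW v' - poly LW v" unfolding LW_def by (rule sp_neg[OF W])
    then show "poly LW v' = poly LW v \<longleftrightarrow> v' - v \<in> W"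
      using sp_roots[OF Wp(1), of "v' - v"] unfolding LW_def by auto
  qed
  have degLW: "degree LW = card W" unfolding LW_def using sp_degree[OF Wp(1)] .
  have cW: "card W > 0" using fas_card_pos[OF W] .
  have "degree P = degree (subspace_poly W') * degree LW" unfolding P_def by (rule degree_pcompose)
  then have degP: "degree P = card V" using sp_degree[OF finW'] degLW cnt by simp
  have leadP: "lead_coeff P = 1"
  proof -
    have c1: "coeff LW (card W) = 1" using sp_monic[of W] degLW LW_def by simp
    have c2: "lead_coeff (subspace_poly W') = 1" by (rule sp_monic)
    show ?thesis
      unfolding P_def using lead_coeff_comp[of LW "subspace_poly W'"] degLW cW c1 c2 by simp
  qed
  have "\<forall>v\<in>V. poly P v = 0"
    unfolding P_def poly_pcompose using sp_roots[OF finW'] W'_def by auto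
  then have "subspace_poly V dvd P"
    using roots_prod_dvd[OF Vp(1)] unfolding subspace_poly_def by blast
  then have "subspace_poly V = P"
    by (rule monic_dvd_eq[OF sp_monic leadP]) (simp add: degP sp_degree[OF Vp(1)])
  then show ?thesis unfolding P_def W'_def LW_def by simp
qed

lemma poly_bezout:
  fixes a b :: "'k::field poly"
  shows "\<exists>d u v. d = u * a + v * b \<and> d dvd a \<and> d dvd b"
proof (induction "degree b" arbitrary: a b rule: less_induct)
  case less
  show ?case
  proof (cases "b = 0")
    case True
    then show ?thesis by (intro exI[of _ a] exI[of _ 1] exI[of _ 0]) simp
  next
    case bnz: False
    show ?thesis
    proof (cases "a mod b = 0")
      case True
      then show ?thesis by (intro exI[of _ b] exI[of _ 0] exI[of _ 1]) (simp add: mod_0_imp_dvd)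
    next
      case False
      then have "degree (a mod b) < degree b" using degree_mod_less'[OF bnz] by blast
      then obtain d u v where d: "d = u * b + v * (a mod b)" "d dvd b" "d dvd a mod b"
        using less by blast
      have am: "a mod b = a - (a div b) * b" by (simp add: minus_div_mult_eq_mod)
      have "d = v * a + (u - v * (a div b)) * b" unfolding d(1) am by (simp add: algebra_simps)
      moreover have "d dvd a"
      proof -
        have "d dvd (a div b) * b" using d(2) by (rule dvd_mult)
        then have "d dvd (a div b) * b + a mod b" using d(3) by (rule dvd_add)
        then show ?thesis by simp
      qed
      ultimately show ?thesis using d(2) by blast
    qed
  qed
qed

definition minimal_factor :: "'k::field poly \<Rightarrow> 'k poly \<Rightarrow> bool" where
  "minimal_factor h B \<longleftrightarrow> B dvd h \<and> lead_coeff B = 1 \<and> 0 < degree B \<and>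
     (\<forall>C. C dvd h \<longrightarrow> lead_coeff C = 1 \<longrightarrow> 0 < degree C \<longrightarrow> degree B \<le> degree C)"

lemma minimal_factor_irr:
  assumes "minimal_factor h B" "h \<noteq> 0" "lead_coeff D = 1" "0 < degree D" "D dvd B"
  shows "D = B"
proof -
  have "D dvd h" using assms unfolding minimal_factor_def using dvd_trans by blast
  then have "degree B \<le> degree D" using assms unfolding minimal_factor_def by blast
  then show ?thesis using monic_dvd_eq[of D B] assms unfolding minimal_factor_def by blast
qed

lemma minimal_factor_prime:
  assumes mf: "minimal_factor h B" and h0: "h \<noteq> 0" and dv: "B dvd P * Q"
  shows "B dvd P \<or> B dvd Q"
proof -
  obtain d u v where d: "d = u * B + v * P" "d dvd B" "d dvd P" using poly_bezout by blast
  have B0: "B \<noteq> 0" using mf unfolding minimal_factor_def by auto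
  then have d0: "d \<noteq> 0" using d(2) by auto
  show ?thesis
  proof (cases "degree d = 0")
    case False
    define D where "D = smult (inverse (lead_coeff d)) d"
    have ld: "lead_coeff d \<noteq> 0" using d0 by simp
    have "lead_coeff D = 1" unfolding D_def using ld by simp
    moreover have "degree D = degree d" unfolding D_def using ld by simp
    moreover have "D dvd B" unfolding D_def using d(2) ld by (simp add: smult_dvd)
    ultimately have "D = B" using minimal_factor_irr[OF mf h0] False by auto
    moreover have "D dvd d" unfolding D_def using ld by (simp add: smult_dvd)
    ultimately show ?thesis using d(3) dvd_trans by blast
  next
    case True
    then obtain e where e: "d = [:e:]" by (metis degree_eq_zeroE)
    then have e0: "e \<noteq> 0" using d0 by auto
    have one: "1 = smult (inverse e) u * B + smult (inverse e) v * P"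
    proof -
      have "smult (inverse e) d = 1" using e e0 by (simp add: one_pCons)
      then show ?thesis using d(1) by (simp add: algebra_simps smult_add_right)
    qed
    have "Q = Q * (smult (inverse e) u * B + smult (inverse e) v * P)"
      using one by simp
    also have "\<dots> = (Q * smult (inverse e) u) * B + smult (inverse e) v * (P * Q)"
      by (simp add: algebra_simps)
    finally have "Q = (Q * smult (inverse e) u) * B + smult (inverse e) v * (P * Q)" .
    moreover have "B dvd (Q * smult (inverse e) u) * B" by (rule dvd_triv_right)
    moreover have "B dvd smult (inverse e) v * (P * Q)" using dv by (rule dvd_mult)
    ultimately have "B dvd Q" by (metis dvd_add)
    then show ?thesis by blast
  qed
qed

lemma minimal_factor_eq:
  assumes "minimal_factor h B" "minimal_factor h B'" "h \<noteq> 0" "B dvd B'"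
  shows "B = B'"
  using minimal_factor_irr[OF assms(2,3)] assms unfolding minimal_factor_def by blast

lemma minimal_factor_dvd_prod:
  assumes mf: "minimal_factor h s" and h0: "h \<noteq> 0" and fin: "finite T"
    and allT: "\<forall>t\<in>T. minimal_factor h t" and dv: "s dvd (\<Prod>t\<in>T. t)"
  shows "s \<in> T"
  using fin allT dv
proof (induction T rule: finite_induct)
  case empty
  then have s1: "s dvd 1" by simp
  then have "s \<noteq> 0" by auto
  then have "degree s = 0" using s1 is_unit_iff_degree by blast
  then show ?case using mf unfolding minimal_factor_def by simp
next
  case (insert t T)
  have "s dvd t * (\<Prod>t\<in>T. t)" using insert by simp
  then have "s dvd t \<or> s dvd (\<Prod>t\<in>T. t)" using minimal_factor_prime[OF mf h0] by blast
  then show ?case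
  proof
    assume "s dvd t"
    then have "s = t" using minimal_factor_eq[OF mf _ h0] insert.prems by auto
    then show ?thesis by simp
  next
    assume "s dvd (\<Prod>t\<in>T. t)"
    then show ?thesis using insert by auto
  qed
qed

lemma minimal_factor_prod_dvd:
  assumes h0: "h \<noteq> 0" and fin: "finite S" and allS: "\<forall>t\<in>S. minimal_factor h t"
  shows "(\<Prod>t\<in>S. t) dvd h"
  using fin allS
proof (induction S rule: finite_induct)
  case empty
  then show ?case by simp
next
  case (insert s T)
  then obtain B where B: "h = (\<Prod>t\<in>T. t) * B" by (auto elim: dvdE)
  have mf: "minimal_factor h s" using insert by auto
  have "\<not> s dvd (\<Prod>t\<in>T. t)"
    using minimal_factor_dvd_prod[OF mf h0 insert.hyps(1)] insert by auto
  moreover have "s dvd (\<Prod>t\<in>T. t) * B" using mf B unfolding minimal_factor_def by simp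
  ultimately have "s dvd B" using minimal_factor_prime[OF mf h0] by blast
  then show ?case using B insert.hyps by (simp add: mult_dvd_mono mult.commute)
qed


lemma pcompose_lin: "pcompose [:-g, 1:] L = L - [:(g::'a::comm_ring_1):]"
proof -
  have "[:-g, 1:] = [:0, 1:] - [:g:]" by simp
  then show ?thesis by (simp add: pcompose_diff pcompose_pCons)
qed

lemma main_field:
  fixes V :: "'k::field set" and c :: 'k and A0 :: "'k poly"
  assumes V: "finite_additive_subgroup V"
    and A0: "A0 dvd subspace_poly V - [:c:]" "lead_coeff A0 = 1" "0 < degree A0" "degree A0 < card V"
  shows "\<exists>W g. finite_additive_subgroup W \<and> W \<subset> V \<and>
           poly (subspace_poly (poly (subspace_poly W) ` V)) g = c"
proof -
  note Vp = fas_props[OF V]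
  define n where "n = card V"
  define h where "h = subspace_poly V - [:c:]"
  have n0: "n > 0" using fas_card_pos[OF V] n_def by simp
  have degsp: "degree (subspace_poly V) = n" using sp_degree[OF Vp(1)] n_def by simp
  have degh: "degree h = n" "lead_coeff h = 1"
    using minus_const_props[of "subspace_poly V" c] degsp n0 sp_monic[of V] unfolding h_def by auto
  have h0: "h \<noteq> 0" using degh by auto
  have htr: "\<And>v. v \<in> V \<Longrightarrow> tr v h = h" unfolding h_def by (simp add: tr_diff sp_tr[OF V])
  define M where "M = (\<lambda>B. B dvd h \<and> lead_coeff B = 1 \<and> 0 < degree B)"
  have MA0: "M A0" using A0 unfolding M_def h_def by simp
  obtain A where MA: "M A" and minA: "\<forall>B. M B \<longrightarrow> degree A \<le> degree B"
    using ex_has_least_nat[of M A0 degree, OF MA0] by blast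
  have mfA: "minimal_factor h A" using MA minA unfolding M_def minimal_factor_def by blast
  define d where "d = degree A"
  have "d \<le> degree A0" using minA MA0 d_def by blast
  then have dlt: "d < n" using A0(4) n_def by simp
  have d0: "0 < d" using MA unfolding M_def d_def by simp
  have mf_tr: "minimal_factor h (tr v A)" if v: "v \<in> V" for v
  proof -
    have "tr v A dvd tr v h" using tr_dvd mfA unfolding minimal_factor_def by blast
    then have "tr v A dvd h" using htr v by simp
    moreover have "lead_coeff (tr v A) = 1" "degree (tr v A) = degree A"
      using lead_coeff_tr[of v A] degree_tr[of v A] mfA unfolding minimal_factor_def by auto
    ultimately show "minimal_factor h (tr v A)" using mfA unfolding minimal_factor_def
      by simp
  qed
  define S where "S = (\<lambda>v. tr v A) ` V"
  have finS: "finite S" using Vp(1) S_def by simp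
  have "(\<Prod>t\<in>S. t) dvd h" using minimal_factor_prod_dvd[OF h0 finS] mf_tr S_def by blast
  then have dprod: "degree (\<Prod>t\<in>S. t) \<le> n" using dvd_imp_degree_le[OF _ h0] degh(1) by simp
  have "degree (\<Prod>t\<in>S. t) = (\<Sum>t\<in>S. degree t)"
  proof (rule degree_prod_eq_sum_degree, rule ballI)
    fix t assume "t \<in> S"
    then obtain v where v: "v \<in> V" "t = tr v A" unfolding S_def by blast
    then have "lead_coeff t = 1" using mf_tr[OF v(1)] unfolding minimal_factor_def by blast
    then show "t \<noteq> 0" by auto
  qed
  also have "\<dots> = (\<Sum>t\<in>S. d)"
    by (rule sum.cong) (auto simp: S_def degree_tr d_def)
  also have "\<dots> = card S * d" by simp
  finally have cSd: "card S * d \<le> n" using dprod by simp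
  define W where "W = {w \<in> V. tr w A = A}"
  have WV: "W \<subseteq> V" unfolding W_def by auto
  have finW: "finite W" using finite_subset[OF WV Vp(1)] .
  have fib: "tr v' A = tr v A \<longleftrightarrow> v' - v \<in> W" if vv: "v \<in> V" "v' \<in> V" for v v'
  proof
    assume eq: "tr v' A = tr v A"
    then have "tr (-v) (tr v' A) = tr (-v) (tr v A)" by simp
    then have "tr (v' - v) A = A" by (simp add: tr_tr)
    then show "v' - v \<in> W" using W_def Vp(5) vv by auto
  next
    assume "v' - v \<in> W"
    then have "tr (v' - v) A = A" by (simp add: W_def)
    then have "tr v (tr (v' - v) A) = tr v A" by simp
    then show "tr v' A = tr v A" by (simp add: tr_tr)
  qed
  have Wfas: "finite_additive_subgroup W"
    unfolding finite_additive_subgroup_def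
  proof (intro conjI ballI)
    show "finite W" by (rule finW)
    show "0 \<in> W" using Vp(2) W_def by simp
  next
    fix a b assume ab: "a \<in> W" "b \<in> W"
    then have "tr (a + b) A = tr b (tr a A)" by (simp add: tr_tr)
    also have "\<dots> = A" using ab W_def by simp
    finally show "a + b \<in> W" using ab W_def Vp(3) by auto
  next
    fix a assume a: "a \<in> W"
    then have "tr (-a) A = tr (-a) (tr a A)" using W_def by simp
    also have "\<dots> = A" by (rule tr_inv)
    finally show "- a \<in> W" using a W_def Vp(4) by auto
  qed
  have cnt: "card V = card S * card W"
    unfolding S_def
  proof (rule count_fibers[OF Vp(1) finW])
    fix v w assume "v \<in> V" "w \<in> W"
    then show "v + w \<in> V" using Vp(3) WV by auto
  next
    fix v v' assume "v \<in> V" "v' \<in> V"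
    then show "tr v' A = tr v A \<longleftrightarrow> v' - v \<in> W" by (rule fib)
  qed
  have cS: "card S > 0" using finS S_def Vp(2) card_gt_0_iff by blast
  have dW: "d \<le> card W" using cSd cnt n_def cS by simp
  define a0 where "a0 = coeff A 0"
  define D where "D = A - [:a0:]"
  have degD: "degree D = d" "lead_coeff D = 1"
    using minus_const_props[of A a0] d0 MA unfolding D_def d_def M_def by auto
  have "\<forall>w\<in>W. poly D w = 0"
  proof
    fix w assume w: "w \<in> W"
    have "poly A w = poly (tr w A) 0" by (simp add: poly_tr)
    also have "\<dots> = poly A 0" using w W_def by simp
    also have "\<dots> = a0" by (simp add: a0_def poly_0_coeff_0)
    finally show "poly D w = 0" unfolding D_def by simp
  qed
  then have "subspace_poly W dvd D"
    using roots_prod_dvd[OF finW] unfolding subspace_poly_def by blast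
  then have spD: "subspace_poly W = D"
    by (rule monic_dvd_eq[OF sp_monic degD(2)]) (simp add: degD(1) sp_degree[OF finW] dW)
  have cardW: "card W = d" using spD degD(1) sp_degree[OF finW] by simp
  have WsV: "W \<subset> V" using WV cardW dlt n_def by auto
  define g where "g = - a0"
  have Aeq: "A = subspace_poly W - [:g:]" using spD D_def g_def by simp
  define P' where "P' = subspace_poly (poly (subspace_poly W) ` V)"
  have "poly (P' - [:poly P' g:]) g = 0" by simp
  then have "[:-g, 1:] dvd P' - [:poly P' g:]" using poly_eq_0_iff_dvd by blast
  then obtain Q where Q: "P' - [:poly P' g:] = [:-g, 1:] * Q" by (elim dvdE)
  have "pcompose (P' - [:poly P' g:]) (subspace_poly W) = subspace_poly V - [:poly P' g:]"
    by (simp add: pcompose_diff P'_def sp_compose[OF V Wfas WV])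
  moreover have "pcompose ([:-g, 1:] * Q) (subspace_poly W) = A * pcompose Q (subspace_poly W)"
    unfolding pcompose_mult pcompose_lin Aeq by (rule refl)
  ultimately have e1: "subspace_poly V - [:poly P' g:] = A * pcompose Q (subspace_poly W)"
    using Q by simp
  obtain B where B: "h = A * B" using mfA unfolding minimal_factor_def by (auto elim: dvdE)
  have "[:poly P' g - c:] = h - (subspace_poly V - [:poly P' g:])"
    unfolding h_def by (simp add: diff_pCons)
  also have "\<dots> = A * (B - pcompose Q (subspace_poly W))"
    using B e1 by (simp add: right_diff_distrib)
  finally have e2: "[:poly P' g - c:] = A * (B - pcompose Q (subspace_poly W))" .
  have "poly P' g = c"
  proof (rule ccontr)
    assume ne: "poly P' g \<noteq> c"
    then have l0: "[:poly P' g - c:] \<noteq> 0" by simp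
    then have r0: "B - pcompose Q (subspace_poly W) \<noteq> 0" using e2 by auto
    have A0': "A \<noteq> 0" using MA M_def by auto
    have "degree [:poly P' g - c:] = d + degree (B - pcompose Q (subspace_poly W))"
      using e2 degree_mult_eq[OF A0' r0] d_def by simp
    then show False using d0 by simp
  qed
  then show ?thesis using Wfas WsV P'_def by blast
qed


definition rhom :: "('a::comm_ring_1 \<Rightarrow> 'b::comm_ring_1) \<Rightarrow> bool" where
  "rhom f \<longleftrightarrow> f 0 = 0 \<and> f 1 = 1 \<and> (\<forall>x y. f (x + y) = f x + f y) \<and> (\<forall>x y. f (x * y) = f x * f y)"

lemma rhomD:
  assumes "rhom f"
  shows "f 0 = 0" "f 1 = 1" "f (x + y) = f x + f y" "f (x * y) = f x * f y"
    "f (- x) = - f x" "f (x - y) = f x - f y"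
proof -
  show f0: "f 0 = 0" and "f 1 = 1" and fa: "\<And>x y. f (x + y) = f x + f y" and "f (x * y) = f x * f y"
    using assms unfolding rhom_def by auto
  have "f (- x) + f x = 0" using fa[of "- x" x] f0 by simp
  then show fn: "f (- x) = - f x" by (simp add: eq_neg_iff_add_eq_0)
  have "f (x - y) = f (x + - y)" by simp
  also have "\<dots> = f x - f y" using fa[of x "- y"] assms unfolding rhom_def
    by (metis add_eq_0_iff diff_conv_add_uminus)
  finally show "f (x - y) = f x - f y" .
qed

lemma map_poly_add_hom:
  assumes "rhom f"
  shows "map_poly f (p + q) = map_poly f p + map_poly f q"
  by (intro poly_eqI) (simp add: coeff_map_poly rhomD[OF assms])

lemma map_poly_mult_hom:
  assumes "rhom f"
  shows "map_poly f (p * q) = map_poly f p * map_poly f q"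
proof (induction p)
  case 0
  then show ?case by (simp add: rhomD[OF assms])
next
  case (pCons a p)
  have "map_poly f (pCons a p * q) = map_poly f (smult a q + pCons 0 (p * q))"
    by simp
  also have "\<dots> = smult (f a) (map_poly f q) + pCons 0 (map_poly f (p * q))"
    by (simp add: map_poly_add_hom[OF assms] map_poly_smult map_poly_pCons rhomD[OF assms])
  also have "\<dots> = map_poly f (pCons a p) * map_poly f q"
    using pCons by (simp add: map_poly_pCons rhomD[OF assms])
  finally show ?case .
qed

lemma rhom_map_poly: "rhom f \<Longrightarrow> rhom (map_poly f)"
  unfolding rhom_def[of "map_poly f"]
  by (simp add: map_poly_add_hom map_poly_mult_hom rhomD one_pCons map_poly_pCons)

lemma rhom_const: "rhom (\<lambda>x::'a::comm_ring_1. [:x:])"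
  unfolding rhom_def by (simp add: one_pCons)

lemma rhom_to_fract: "rhom to_fract"
  unfolding rhom_def by simp

lemma rhom_comp: "rhom f \<Longrightarrow> rhom g \<Longrightarrow> rhom (f \<circ> g)"
  unfolding rhom_def by simp

lemma poly_hom:
  assumes "rhom f"
  shows "poly (map_poly f p) (f x) = f (poly p x)"
  by (induction p) (simp_all add: map_poly_pCons rhomD[OF assms])

lemma map_poly_const_hom:
  assumes "f 0 = 0"
  shows "map_poly f [:c:] = [:f c:]"
  by (simp add: map_poly_pCons assms)

lemma sp_map:
  fixes f :: "'a::field \<Rightarrow> 'b::field"
  assumes f: "rhom f" "inj f" and U: "finite U"
  shows "map_poly f (subspace_poly U) = subspace_poly (f ` U)"
proof -
  have nz: "\<And>x. x \<noteq> 0 \<Longrightarrow> f x \<noteq> 0" using f rhomD(1)[OF f(1)] by (metis injD)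
  define Q where "Q = map_poly f (subspace_poly U)"
  have "degree (map_poly f (subspace_poly U)) = degree (subspace_poly U)"
    by (rule degree_map_poly) (rule nz)
  then have degQ: "degree Q = card U" unfolding Q_def using sp_degree[OF U] by simp
  have leadQ: "lead_coeff Q = 1" unfolding Q_def
    using lead_coeff_map_poly_nz[of f "subspace_poly U"] sp_monic[of U] rhomD[OF f(1)] by simp
  have finI: "finite (f ` U)" using U by simp
  have "\<forall>y\<in>f ` U. poly Q y = 0"
  proof
    fix y assume "y \<in> f ` U"
    then obtain u where u: "u \<in> U" "y = f u" by blast
    have "poly Q y = f (poly (subspace_poly U) u)" unfolding Q_def u(2) by (rule poly_hom[OF f(1)])
    also have "\<dots> = 0"
    proof -
      have "poly (subspace_poly U) u = 0" using sp_roots[OF U] u(1) by simp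
      then show ?thesis using rhomD(1)[OF f(1)] by simp
    qed
    finally show "poly Q y = 0" .
  qed
  then have "subspace_poly (f ` U) dvd Q"
    using roots_prod_dvd[OF finI] unfolding subspace_poly_def by blast
  moreover have "degree Q \<le> degree (subspace_poly (f ` U))"
    using degQ sp_degree[OF finI] card_image[OF inj_on_subset[OF f(2)]] by simp
  ultimately have "subspace_poly (f ` U) = Q" using monic_dvd_eq[OF sp_monic leadQ] by blast
  then show ?thesis unfolding Q_def by simp
qed

lemma prod_Fract:
  fixes b :: "'a::idom"
  assumes "finite U" "b \<noteq> 0"
  shows "(\<Prod>u\<in>U. Fract (p u) b) = Fract (\<Prod>u\<in>U. p u) (b ^ card U)"
  using assms
proof (induction U rule: finite_induct)
  case empty
  then show ?case by (simp add: One_fract_def)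
next
  case (insert x U)
  then show ?case by simp
qed

lemma integral_fract:
  fixes U :: "'a::alg_closed_field set" and g :: "'a poly fract"
  assumes U: "finite U" "U \<noteq> {}"
    and eq: "(\<Prod>u\<in>U. (g - to_fract [:u:])) = to_fract f"
  shows "\<exists>r. g = to_fract r"
proof -
  define Pr where "Pr = (\<lambda>b. b \<noteq> 0 \<and> (\<exists>a. g = Fract a b))"
  obtain a0 b0 where ab0: "g = Fract a0 b0" "b0 \<noteq> 0" by (cases g) auto
  have "Pr b0" using ab0 Pr_def by blast
  then obtain b where Pb: "Pr b" and minb: "\<forall>b'. Pr b' \<longrightarrow> degree b \<le> degree b'"
    using ex_has_least_nat[of Pr b0 degree] by blast
  then obtain a where ab: "g = Fract a b" "b \<noteq> 0" unfolding Pr_def by blast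
  show ?thesis
  proof (cases "degree b = 0")
    case True
    then obtain c where c: "b = [:c:]" by (metis degree_eq_zeroE)
    then have c0: "c \<noteq> 0" using ab by auto
    have "Fract a b = Fract (smult (inverse c) a) 1"
      using ab(2) c c0 by (simp add: eq_fract)
    then show ?thesis using ab(1) unfolding to_fract_def by blast
  next
    case False
    then obtain x0 where x0: "poly b x0 = 0" using alg_closed_imp_poly_has_root by blast
    show ?thesis
    proof (cases "poly a x0 = 0")
      case True
      define l where "l = [:-x0, 1:]"
      have "l dvd a" "l dvd b" using True x0 poly_eq_0_iff_dvd l_def by blast+
      then obtain a' b' where a': "a = l * a'" and b': "b = l * b'" by (auto elim!: dvdE)
      have l0: "l \<noteq> 0" unfolding l_def by simp
      have b'0: "b' \<noteq> 0" using b' ab(2) by auto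
      have "g = Fract a' b'" using ab(1) a' b' mult_fract_cancel[OF l0] by simp
      then have "Pr b'" using b'0 Pr_def by blast
      moreover have "degree b = degree l + degree b'" using b' degree_mult_eq[OF l0 b'0] by simp
      moreover have "degree l = 1" unfolding l_def by simp
      ultimately show ?thesis using minb by force
    next
      case False
      have fac: "g - to_fract [:u:] = Fract (a - [:u:] * b) b" for u
        using ab by (simp add: to_fract_def diff_fract)
      have "(\<Prod>u\<in>U. (g - to_fract [:u:])) = Fract (\<Prod>u\<in>U. (a - [:u:] * b)) (b ^ card U)"
        unfolding fac by (rule prod_Fract[OF U(1) ab(2)])
      then have "Fract (\<Prod>u\<in>U. (a - [:u:] * b)) (b ^ card U) = Fract f 1"
        using eq unfolding to_fract_def by simp
      then have e: "(\<Prod>u\<in>U. (a - [:u:] * b)) = f * b ^ card U"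
        using ab(2) by (simp add: eq_fract)
      have "poly (\<Prod>u\<in>U. (a - [:u:] * b)) x0 = (\<Prod>u\<in>U. poly a x0)"
        by (simp add: poly_prod x0)
      also have "\<dots> \<noteq> 0" using False by simp
      finally have "poly (f * b ^ card U) x0 \<noteq> 0" using e by simp
      moreover have "card U > 0" using U card_gt_0_iff by blast
      ultimately show ?thesis using x0 by (simp add: poly_power)
    qed
  qed
qed


lemma map_poly_diff_hom:
  assumes "rhom f"
  shows "map_poly f (p - q) = map_poly f p - map_poly f q"
  by (intro poly_eqI) (simp add: coeff_map_poly rhomD[OF assms])

lemma dvd_poly_diff: "x - y dvd poly p x - poly p (y::'a::comm_ring_1)"
proof (induction p)
  case 0
  then show ?case by simp
next
  case (pCons a p)
  have e: "poly (pCons a p) x - poly (pCons a p) y = x * (poly p x - poly p y) + (x - y) * poly p y"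
    by (simp add: algebra_simps)
  have "x - y dvd x * (poly p x - poly p y)" using pCons.IH by (rule dvd_mult)
  moreover have "x - y dvd (x - y) * poly p y" by (rule dvd_triv_left)
  ultimately show ?case unfolding e by (rule dvd_add)
qed

lemma unit_degree0:
  fixes p :: "'a::idom_divide poly"
  assumes "is_unit p"
  shows "degree p = 0"
proof -
  obtain q where q: "1 = p * q" using assms by (elim dvdE)
  then have "p \<noteq> 0" "q \<noteq> 0" by auto
  then have "degree (p * q) = degree p + degree q" by (rule degree_mult_eq)
  then show ?thesis using q[symmetric] by simp
qed

lemma E_props:
  fixes p :: "'a::field poly"
  shows "degree (map_poly (\<lambda>c. [:c:]) p) = degree p"
    "lead_coeff (map_poly (\<lambda>c. [:c:]) p) = [:lead_coeff p:]"
proof -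
  show "degree (map_poly (\<lambda>c. [:c:]) p) = degree p" by (rule degree_map_poly) simp
  show "lead_coeff (map_poly (\<lambda>c. [:c:]) p) = [:lead_coeff p:]"
  proof (cases "p = 0")
    case True
    then show ?thesis by simp
  next
    case False
    then show ?thesis by (intro lead_coeff_map_poly_nz) auto
  qed
qed

lemma h_props:
  fixes V :: "'a::field set"
  assumes V: "finite_additive_subgroup V"
  shows "degree (h_poly V f) = card V" "lead_coeff (h_poly V f) = 1"
proof -
  have d: "degree (map_poly (\<lambda>c. [:c:]) (subspace_poly V)) = card V"
    using E_props(1) sp_degree fas_props(1)[OF V] by metis
  have l: "lead_coeff (map_poly (\<lambda>c. [:c:]) (subspace_poly V)) = 1"
    using E_props(2)[of "subspace_poly V"] sp_monic[of V] by (simp add: one_pCons)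
  have c: "0 < card V" using fas_card_pos[OF V] .
  show "degree (h_poly V f) = card V" unfolding h_poly_def
    using minus_const_props(1)[of "map_poly (\<lambda>c. [:c:]) (subspace_poly V)" f] d c by simp
  show "lead_coeff (h_poly V f) = 1" unfolding h_poly_def
    using minus_const_props(2)[of "map_poly (\<lambda>c. [:c:]) (subspace_poly V)" f] d c l by simp
qed

lemma back_dir:
  fixes V W :: "'a::field set" and f g :: "'a poly"
  assumes V: "finite_additive_subgroup V" and W: "finite_additive_subgroup W" and WV: "W \<subset> V"
    and f: "f = pcompose (subspace_poly (poly (subspace_poly W) ` V)) g"
  shows "\<not> irreducible (h_poly V f)"
proof
  assume irr: "irreducible (h_poly V f)"
  define E where "E = (map_poly (\<lambda>c. [:c:]) :: 'a poly \<Rightarrow> 'a poly poly)"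
  define P where "P = subspace_poly (poly (subspace_poly W) ` V)"
  define LW where "LW = subspace_poly W"
  define Pe where "Pe = map_poly (\<lambda>c. [:[:c:]:]) P"
  have hE: "rhom E" unfolding E_def by (rule rhom_map_poly[OF rhom_const])
  have cmp: "E \<circ> (\<lambda>x. [:x:]) = (\<lambda>c. [:[:c:]:])" unfolding E_def
    by (rule ext) (simp add: map_poly_const_hom)
  have cmp2: "(\<lambda>q. [:q:]) \<circ> (\<lambda>x. [:x:]) = (\<lambda>c::'a. [:[:c:]:])" by (rule ext) simp
  have LV: "subspace_poly V = pcompose P LW" using sp_compose[OF V W] WV P_def LW_def by auto
  have e1: "E (subspace_poly V) = poly Pe (E LW)"
  proof -
    have "E (subspace_poly V) = E (poly (map_poly (\<lambda>x. [:x:]) P) LW)"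
      unfolding LV pcompose_altdef by (rule refl)
    also have "\<dots> = poly (map_poly E (map_poly (\<lambda>x. [:x:]) P)) (E LW)" by (rule poly_hom[OF hE, symmetric])
    also have "map_poly E (map_poly (\<lambda>x. [:x:]) P) = Pe" unfolding Pe_def
      using map_poly_map_poly[of E "\<lambda>x. [:x:]" P] rhomD(1)[OF hE] cmp by simp
    finally show ?thesis .
  qed
  have e2: "[:f:] = poly Pe [:g:]"
  proof -
    have "[:f:] = [:poly (map_poly (\<lambda>x. [:x:]) P) g:]"
      unfolding f P_def[symmetric] pcompose_altdef by (rule refl)
    also have "\<dots> = poly (map_poly (\<lambda>q. [:q:]) (map_poly (\<lambda>x. [:x:]) P)) [:g:]"
      by (rule poly_hom[OF rhom_const, symmetric])
    also have "map_poly (\<lambda>q. [:q:]) (map_poly (\<lambda>x. [:x:]) P) = Pe" unfolding Pe_def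
      using map_poly_map_poly[of "\<lambda>q. [:q:]" "\<lambda>x. [:x:]" P] cmp2 by simp
    finally show ?thesis .
  qed
  have hdef: "h_poly V f = poly Pe (E LW) - poly Pe [:g:]"
    unfolding h_poly_def using e1 e2 E_def by simp
  define B where "B = E LW - [:g:]"
  have "B dvd h_poly V f" unfolding hdef B_def by (rule dvd_poly_diff)
  then obtain C where C: "h_poly V f = B * C" by (elim dvdE)
  have finW: "finite W" and finV: "finite V" using fas_props(1) V W by auto
  have cW: "0 < card W" using fas_card_pos[OF W] .
  have cWV: "card W < card V" using psubset_card_mono[OF finV WV] .
  have dLW: "degree (E LW) = card W" unfolding E_def LW_def using E_props(1) sp_degree[OF finW] by metis
  have dB: "degree B = card W" unfolding B_def using minus_const_props(1)[of "E LW" g] dLW cW by simp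
  have dh: "degree (h_poly V f) = card V" using h_props[OF V] by simp
  have h0: "h_poly V f \<noteq> 0" using h_props(2)[OF V, of f] by auto
  have B0: "B \<noteq> 0" and C0: "C \<noteq> 0" using C h0 by auto
  have "degree (h_poly V f) = degree B + degree C" using C degree_mult_eq[OF B0 C0] by simp
  then have dC: "degree C > 0" using dh dB cWV by simp
  have "is_unit B \<or> is_unit C" using irreducibleD[OF irr C] .
  then show False
  proof
    assume "is_unit B"
    then have "degree B = 0" by (rule unit_degree0)
    then show False using dB cW by simp
  next
    assume "is_unit C"
    then have "degree C = 0" by (rule unit_degree0)
    then show False using dC by simp
  qed
qed


lemma const_unit_poly:
  fixes c :: "'a::idom_divide"
  assumes "c * d = 1"
  shows "is_unit [:c:]"
proof -
  have dc: "d * c = 1" using assms by (simp add: mult.commute)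
  have "[:c:] * [:d:] = 1" using assms dc by (simp add: one_pCons)
  then show ?thesis by (metis dvd_triv_left)
qed

lemma pos_degree_factor:
  fixes x :: "'a::idom_divide poly"
  assumes "\<not> is_unit x" "lead_coeff x * d = 1"
  shows "0 < degree x"
proof (rule ccontr)
  assume "\<not> 0 < degree x"
  then have "degree x = 0" by simp
  then have "x = [:lead_coeff x:]" by (metis degree_0_id)
  then show False using assms const_unit_poly[OF assms(2)] by metis
qed

lemma fwd_dir:
  fixes V :: "'a::alg_closed_field set" and f :: "'a poly"
  assumes V: "finite_additive_subgroup V" and red: "\<not> irreducible (h_poly V f)"
  shows "\<exists>g W. finite_additive_subgroup W \<and> W \<subset> V \<and>
           f = pcompose (subspace_poly (poly (subspace_poly W) ` V)) g"
proof -
  define h where "h = h_poly V f"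
  define n where "n = card V"
  note Vp = fas_props[OF V]
  have n0: "0 < n" using fas_card_pos[OF V] n_def by simp
  have dh: "degree h = n" and lh: "lead_coeff h = 1" using h_props[OF V] h_def n_def by auto
  have h0: "h \<noteq> 0" using lh by auto
  have hnu: "\<not> is_unit h" using unit_degree0[of h] dh n0 by auto
  have "\<exists>a b. h = a * b \<and> \<not> is_unit a \<and> \<not> is_unit b"
  proof (rule ccontr)
    assume nex: "\<not> ?thesis"
    have "irreducible h"
    proof (rule irreducibleI[OF h0 hnu])
      fix x y assume xy: "h = x * y"
      show "is_unit x \<or> is_unit y"
      proof (rule ccontr)
        assume "\<not> (is_unit x \<or> is_unit y)"
        then have "h = x * y \<and> \<not> is_unit x \<and> \<not> is_unit y" using xy by blast
        then show False using nex by blast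
      qed
    qed
    then show False using red h_def by simp
  qed
  then obtain a b where ab: "h = a * b" "\<not> is_unit a" "\<not> is_unit b" by blast
  have a0: "a \<noteq> 0" and b0: "b \<noteq> 0" using ab h0 by auto
  have lab: "lead_coeff a * lead_coeff b = 1" using lh ab(1) by (simp add: lead_coeff_mult)
  have da: "0 < degree a" using pos_degree_factor[OF ab(2) lab] .
  have db: "0 < degree b" using pos_degree_factor[OF ab(3), of "lead_coeff a"] lab
    by (simp add: mult.commute)
  have "degree h = degree a + degree b" using ab(1) degree_mult_eq[OF a0 b0] by simp
  then have dan: "degree a < n" using dh db by simp
  define emb where "emb = (to_fract \<circ> (\<lambda>x. [:x:]) :: 'a \<Rightarrow> 'a poly fract)"
  define F where "F = (map_poly to_fract :: 'a poly poly \<Rightarrow> 'a poly fract poly)"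
  have hemb: "rhom emb" unfolding emb_def by (rule rhom_comp[OF rhom_to_fract rhom_const])
  have iemb: "inj emb" unfolding emb_def inj_def by simp
  have hF: "rhom F" unfolding F_def by (rule rhom_map_poly[OF rhom_to_fract])
  define VK where "VK = emb ` V"
  have FE: "F (map_poly (\<lambda>c. [:c:]) p) = map_poly emb p" for p :: "'a poly"
    unfolding F_def emb_def by (rule map_poly_map_poly) auto
  have Fh: "F h = subspace_poly VK - [:to_fract f:]"
  proof -
    have "F h = F (map_poly (\<lambda>c. [:c:]) (subspace_poly V)) - F [:f:]"
      unfolding h_def h_poly_def by (rule rhomD(6)[OF hF])
    also have "F [:f:] = [:to_fract f:]" unfolding F_def by (rule map_poly_const_hom) simp
    also have "F (map_poly (\<lambda>c. [:c:]) (subspace_poly V)) = subspace_poly VK"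
      unfolding FE VK_def by (rule sp_map[OF hemb iemb Vp(1)])
    finally show ?thesis .
  qed
  have Fab: "F h = F a * F b" using ab(1) rhomD(4)[OF hF] by simp
  have dFa: "degree (F a) = degree a" unfolding F_def by (rule degree_map_poly) simp
  have lFa: "lead_coeff (F a) = to_fract (lead_coeff a)" unfolding F_def
    by (rule lead_coeff_map_poly_nz) (use a0 in auto)
  have lFa0: "lead_coeff (F a) \<noteq> 0" using lFa a0 by simp
  define A0 where "A0 = smult (inverse (lead_coeff (F a))) (F a)"
  have A0l: "lead_coeff A0 = 1" unfolding A0_def using lFa0 by simp
  have A0d: "degree A0 = degree a" unfolding A0_def using lFa0 dFa by simp
  have "A0 dvd F a" unfolding A0_def using lFa0 by (simp add: smult_dvd)
  then have A0dvd: "A0 dvd subspace_poly VK - [:to_fract f:]" using Fh Fab by (metis dvd_mult2)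
  have cVK: "card VK = n" unfolding VK_def n_def using card_image[OF inj_on_subset[OF iemb]] by blast
  have VKfas: "finite_additive_subgroup VK"
    unfolding finite_additive_subgroup_def
  proof (intro conjI ballI)
    show "finite VK" unfolding VK_def using Vp(1) by simp
    show "0 \<in> VK" unfolding VK_def using Vp(2) rhomD(1)[OF hemb] by (metis imageI)
  next
    fix x y assume "x \<in> VK" "y \<in> VK"
    then obtain u v where "u \<in> V" "v \<in> V" "x = emb u" "y = emb v" unfolding VK_def by blast
    then show "x + y \<in> VK" unfolding VK_def using Vp(3) rhomD(3)[OF hemb, of u v] by (metis imageI)
  next
    fix x assume "x \<in> VK"
    then obtain u where "u \<in> V" "x = emb u" unfolding VK_def by blast
    then show "- x \<in> VK" unfolding VK_def using Vp(4) rhomD(5)[OF hemb, of u] by (metis imageI)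
  qed
  obtain WK g where WK: "finite_additive_subgroup WK" "WK \<subset> VK"
    and gK: "poly (subspace_poly (poly (subspace_poly WK) ` VK)) g = to_fract f"
    using main_field[OF VKfas A0dvd A0l] A0d da dan cVK by auto
  define W where "W = {v \<in> V. emb v \<in> WK}"
  have WKe: "WK = emb ` W" unfolding W_def using WK(2) VK_def by auto
  have WV: "W \<subseteq> V" unfolding W_def by auto
  have Wfas: "finite_additive_subgroup W"
    unfolding finite_additive_subgroup_def
  proof (intro conjI ballI)
    show "finite W" using finite_subset[OF WV Vp(1)] .
    show "0 \<in> W" unfolding W_def using Vp(2) fas_props(2)[OF WK(1)] rhomD(1)[OF hemb] by simp
  next
    fix x y assume "x \<in> W" "y \<in> W"
    then show "x + y \<in> W" unfolding W_def using Vp(3) fas_props(3)[OF WK(1)] rhomD(3)[OF hemb]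
      by simp
  next
    fix x assume "x \<in> W"
    then show "- x \<in> W" unfolding W_def using Vp(4) fas_props(4)[OF WK(1)] rhomD(5)[OF hemb]
      by simp
  qed
  have finW: "finite W" using fas_props(1)[OF Wfas] .
  have WsV: "W \<subset> V"
  proof -
    have "W \<noteq> V" using WK(2) WKe VK_def by auto
    then show ?thesis using WV by auto
  qed
  define W' where "W' = poly (subspace_poly W) ` V"
  have finW': "finite W'" unfolding W'_def using Vp(1) by simp
  have neW': "W' \<noteq> {}" unfolding W'_def using Vp(2) by auto
  have spWK: "subspace_poly WK = map_poly emb (subspace_poly W)"
    unfolding WKe by (rule sp_map[OF hemb iemb finW, symmetric])
  have imgK: "poly (subspace_poly WK) ` VK = emb ` W'"
    unfolding spWK VK_def W'_def image_image poly_hom[OF hemb] by (rule refl)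
  have "subspace_poly (emb ` W') = map_poly emb (subspace_poly W')"
    by (rule sp_map[OF hemb iemb finW', symmetric])
  then have g1: "poly (map_poly emb (subspace_poly W')) g = to_fract f" using gK imgK by simp
  have "poly (subspace_poly (emb ` W')) g = (\<Prod>u\<in>W'. (g - emb u))"
  proof -
    have "poly (subspace_poly (emb ` W')) g = (\<Prod>y\<in>emb ` W'. (g - y))"
      unfolding subspace_poly_def by (simp add: poly_prod)
    also have "\<dots> = (\<Prod>u\<in>W'. (g - emb u))"
      by (rule prod.reindex[OF inj_on_subset[OF iemb], simplified])
    finally show ?thesis .
  qed
  then have "(\<Prod>u\<in>W'. (g - to_fract [:u:])) = to_fract f"
    using g1 \<open>subspace_poly (emb ` W') = _\<close> emb_def by simp
  then obtain r where r: "g = to_fract r" using integral_fract[OF finW' neW'] by blast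
  have "to_fract f = poly (map_poly emb (subspace_poly W')) (to_fract r)" using g1 r by simp
  also have "map_poly emb (subspace_poly W') = map_poly to_fract (map_poly (\<lambda>x. [:x:]) (subspace_poly W'))"
    unfolding emb_def by (rule map_poly_map_poly[symmetric]) auto
  also have "poly \<dots> (to_fract r) = to_fract (poly (map_poly (\<lambda>x. [:x:]) (subspace_poly W')) r)"
    by (rule poly_hom[OF rhom_to_fract])
  also have "poly (map_poly (\<lambda>x. [:x:]) (subspace_poly W')) r = pcompose (subspace_poly W') r"
    by (rule pcompose_altdef[symmetric])
  finally have "f = pcompose (subspace_poly W') r" by simp
  then show ?thesis using Wfas WsV W'_def by blast
qed


theorem proposition4p8:
  fixes p :: nat and V :: "'a::alg_closed_field set" and f :: "'a poly"
  assumes "prime p"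
    and "CHAR('a) = p"
    and "algebraic_over_prime_field TYPE('a)"
    and "finite_additive_subgroup V"
  shows "\<not> irreducible (h_poly V f) \<longleftrightarrow>
    (\<exists>g W. finite_additive_subgroup W \<and> W \<subset> V \<and>
       f = pcompose (subspace_poly (poly (subspace_poly W) ` V)) g)"
proof
  assume "\<not> irreducible (h_poly V f)"
  then show "\<exists>g W. finite_additive_subgroup W \<and> W \<subset> V \<and>
       f = pcompose (subspace_poly (poly (subspace_poly W) ` V)) g"
    by (rule fwd_dir[OF assms(4)])
next
  assume "\<exists>g W. finite_additive_subgroup W \<and> W \<subset> V \<and>
       f = pcompose (subspace_poly (poly (subspace_poly W) ` V)) g"
  then obtain g W where gW: "finite_additive_subgroup W" "W \<subset> V"
    "f = pcompose (subspace_poly (poly (subspace_poly W) ` V)) g" by blast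
  show "\<not> irreducible (h_poly V f)" by (rule back_dir[OF assms(4) gW])
qed

end
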